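(* Let $(\Omega,\mathcal{A},\sigma)$ be a probability space and let $f,g\in L^2(\sigma)$ satisfy $\sigma(\{|fg|=0\})=0$. Then (A) $\mathcal{E}(f\wedge g)\le\mathcal{E}(f)+\mathcal{E}(g)$; (B) $\mathcal{E}(f\vee g)\le\mathcal{E}(f)+\mathcal{E}(g)$; (C) $\mathcal{E}(f\wedge f^2)\le4\,\mathcal{E}(f)$.
   Context: $\mathcal{E}(h)=\int_\Omega|h|^2\,d\sigma-\exp\left(\int_\Omega\log|h|^2\,d\sigma\right)$. For measurable $f,g$, $f\wedge g$ (resp. $f\vee g$) denotes a measurable function with $|f\wedge g|=\min(|f|,|g|)$ (resp. $|f\vee g|=\max(|f|,|g|)$) pointwise (e.g. equal to $g$ where $|g|\le|f|$ and to $f$ elsewhere); $\mathcal{E}$ depends only on the modulus. *)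

theory Defs
  imports "HOL-Probability.Probability"
begin

text \<open>Geometric-mean term exp(\<integral> log|h|^2 d\<sigma>), with the convention exp(-\<infinity>) = 0:
  for h in L^2 the positive part of log|h|^2 is integrable, so non-integrability
  of log|h|^2 means its integral is -\<infinity>.\<close>
definition geo_term :: "'a measure \<Rightarrow> ('a \<Rightarrow> complex) \<Rightarrow> real" where
  "geo_term M h =
     (if integrable M (\<lambda>x. ln ((cmod (h x))\<^sup>2))
      then exp (\<integral>x. ln ((cmod (h x))\<^sup>2) \<partial>M) else 0)"

definition Edef :: "'a measure \<Rightarrow> ('a \<Rightarrow> complex) \<Rightarrow> real" where
  "Edef M h = (\<integral>x. (cmod (h x))\<^sup>2 \<partial>M) - geo_term M h"

definition L2 :: "'a measure \<Rightarrow> ('a \<Rightarrow> complex) set" where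
  "L2 M = {h. h \<in> borel_measurable M \<and> integrable M (\<lambda>x. (cmod (h x))\<^sup>2)}"

end

theory Submission
  imports Defs
begin

definition Gr :: "'a measure \<Rightarrow> ('a \<Rightarrow> real) \<Rightarrow> real" where
  "Gr M w = (if integrable M (\<lambda>x. ln (w x)) then exp (\<integral>x. ln (w x) \<partial>M) else 0)"

lemma geo_Gr: "geo_term M h = Gr M (\<lambda>x. (cmod (h x))\<^sup>2)"
  by (simp add: geo_term_def Gr_def)

lemma Gr_nonneg: "0 \<le> Gr M w" by (simp add: Gr_def)

lemma (in prob_space) Gr_le_int:
  assumes w: "integrable M w" and pos: "AE x in M. 0 < w x"
  shows "Gr M w \<le> integral\<^sup>L M w"
proof (cases "integrable M (\<lambda>x. ln (w x))")
  case True
  define c where "c = exp (\<integral>x. ln (w x) \<partial>M)"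
  have c: "0 < c" by (simp add: c_def)
  have "AE x in M. 1 + ln (w x) - ln c \<le> w x / c"
    using pos
  proof eventually_elim
    case (elim x)
    have "ln (w x / c) \<le> w x / c - 1" using elim c by (intro ln_le_minus_one) simp
    moreover have "ln (w x / c) = ln (w x) - ln c" using elim c by (simp add: ln_div)
    ultimately show ?case by simp
  qed
  then have "(\<integral>x. 1 + ln (w x) - ln c \<partial>M) \<le> (\<integral>x. w x / c \<partial>M)"
    using True w by (intro integral_mono_AE) auto
  moreover have "(\<integral>x. 1 + ln (w x) - ln c \<partial>M) = 1 + (\<integral>x. ln (w x) \<partial>M) - ln c"
    using True by (simp add: prob_space)
  moreover have "ln c = (\<integral>x. ln (w x) \<partial>M)" by (simp add: c_def)
  ultimately have "1 \<le> integral\<^sup>L M w / c" by simp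
  then have "c \<le> integral\<^sup>L M w" using c by (simp add: field_simps)
  then show ?thesis using True by (simp add: Gr_def c_def)
next
  case False
  then show ?thesis using pos by (simp add: Gr_def integral_nonneg_AE eventually_mono less_imp_le)
qed

lemma (in prob_space) Gr_mono:
  assumes w2: "integrable M w2" and m1: "w1 \<in> borel_measurable M" and m2: "w2 \<in> borel_measurable M"
    and pos: "AE x in M. 0 < w1 x" and le: "AE x in M. w1 x \<le> w2 x"
  shows "Gr M w1 \<le> Gr M w2"
proof (cases "integrable M (\<lambda>x. ln (w1 x))")
  case True
  have i2: "integrable M (\<lambda>x. ln (w2 x))"
  proof (rule Bochner_Integration.integrable_bound[of M "\<lambda>x. \<bar>ln (w1 x)\<bar> + w2 x"])
    show "integrable M (\<lambda>x. \<bar>ln (w1 x)\<bar> + w2 x)" using True w2 by auto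
    show "(\<lambda>x. ln (w2 x)) \<in> borel_measurable M" using m2 by measurable
    show "AE x in M. norm (ln (w2 x)) \<le> norm (\<bar>ln (w1 x)\<bar> + w2 x)"
      using pos le
    proof eventually_elim
      case (elim x)
      have a: "ln (w2 x) \<le> w2 x - 1" using elim by (intro ln_le_minus_one) simp
      have b: "ln (w1 x) \<le> ln (w2 x)" using elim by simp
      show ?case unfolding real_norm_def using a b elim by (smt (verit))
    qed
  qed
  have "(\<integral>x. ln (w1 x) \<partial>M) \<le> (\<integral>x. ln (w2 x) \<partial>M)"
    using True i2 pos le by (intro integral_mono_AE) (auto elim: eventually_mono)
  then show ?thesis using True i2 by (simp add: Gr_def)
next
  case False
  then show ?thesis by (simp add: Gr_def)
qed

lemma exp_ineq:
  fixes A B m :: real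
  assumes "m \<le> A" "m \<le> B"
  shows "exp A + exp B \<le> exp m + exp (A + B - m)"
proof -
  have e: "exp (A + B - m) = exp A * exp B / exp m" by (simp add: exp_diff exp_add)
  have "0 \<le> (exp A - exp m) * (exp B - exp m)" using assms by (intro mult_nonneg_nonneg) auto
  then have "exp m * (exp A + exp B) \<le> exp m * exp m + exp A * exp B" by (simp add: algebra_simps)
  then have "exp A + exp B \<le> (exp m * exp m + exp A * exp B) / exp m"
    by (simp add: field_simps)
  also have "\<dots> = exp m + exp (A + B - m)" by (simp add: e add_divide_distrib)
  finally show ?thesis .
qed

lemma (in prob_space) Gr_minmax:
  assumes iu: "integrable M u" and iv: "integrable M v"
    and mu: "u \<in> borel_measurable M" and mv: "v \<in> borel_measurable M"
    and pu: "AE x in M. 0 < u x" and pv: "AE x in M. 0 < v x"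
    and lu: "integrable M (\<lambda>x. ln (u x))" and lv: "integrable M (\<lambda>x. ln (v x))"
  shows "Gr M u + Gr M v \<le> Gr M (\<lambda>x. min (u x) (v x)) + Gr M (\<lambda>x. max (u x) (v x))"
proof -
  have bnd: "integrable M (\<lambda>x. \<bar>ln (u x)\<bar> + \<bar>ln (v x)\<bar>)" using lu lv by auto
  have lmin: "integrable M (\<lambda>x. ln (min (u x) (v x)))"
  proof (rule Bochner_Integration.integrable_bound[OF bnd])
    show "(\<lambda>x. ln (min (u x) (v x))) \<in> borel_measurable M" using mu mv by measurable
  qed (auto simp: min_def)
  have lmax: "integrable M (\<lambda>x. ln (max (u x) (v x)))"
  proof (rule Bochner_Integration.integrable_bound[OF bnd])
    show "(\<lambda>x. ln (max (u x) (v x))) \<in> borel_measurable M" using mu mv by measurable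
  qed (auto simp: max_def)
  have sum: "(\<integral>x. ln (min (u x) (v x)) \<partial>M) + (\<integral>x. ln (max (u x) (v x)) \<partial>M)
      = (\<integral>x. ln (u x) \<partial>M) + (\<integral>x. ln (v x) \<partial>M)"
  proof -
    have "(\<integral>x. ln (min (u x) (v x)) \<partial>M) + (\<integral>x. ln (max (u x) (v x)) \<partial>M)
       = (\<integral>x. ln (min (u x) (v x)) + ln (max (u x) (v x)) \<partial>M)"
      using lmin lmax by simp
    also have "\<dots> = (\<integral>x. ln (u x) + ln (v x) \<partial>M)"
      by (rule Bochner_Integration.integral_cong) (auto simp: min_def max_def)
    also have "\<dots> = (\<integral>x. ln (u x) \<partial>M) + (\<integral>x. ln (v x) \<partial>M)" using lu lv by simp
    finally show ?thesis .
  qed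
  have le1: "(\<integral>x. ln (min (u x) (v x)) \<partial>M) \<le> (\<integral>x. ln (u x) \<partial>M)"
    using pu pv by (intro integral_mono_AE lmin lu) (auto elim: eventually_mono)
  have le2: "(\<integral>x. ln (min (u x) (v x)) \<partial>M) \<le> (\<integral>x. ln (v x) \<partial>M)"
    using pu pv by (intro integral_mono_AE lmin lv) (auto elim: eventually_mono)
  have "exp (\<integral>x. ln (u x) \<partial>M) + exp (\<integral>x. ln (v x) \<partial>M)
     \<le> exp (\<integral>x. ln (min (u x) (v x)) \<partial>M) + exp ((\<integral>x. ln (u x) \<partial>M) + (\<integral>x. ln (v x) \<partial>M) - (\<integral>x. ln (min (u x) (v x)) \<partial>M))"
    by (rule exp_ineq[OF le1 le2])
  also have "(\<integral>x. ln (u x) \<partial>M) + (\<integral>x. ln (v x) \<partial>M) - (\<integral>x. ln (min (u x) (v x)) \<partial>M)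
     = (\<integral>x. ln (max (u x) (v x)) \<partial>M)" using sum by simp
  finally show ?thesis using lu lv lmin lmax by (simp add: Gr_def)
qed

lemma (in prob_space) partA:
  assumes iu: "integrable M u" and iv: "integrable M v"
    and mu: "u \<in> borel_measurable M" and mv: "v \<in> borel_measurable M"
    and pu: "AE x in M. 0 < u x" and pv: "AE x in M. 0 < v x"
  shows "(\<integral>x. min (u x) (v x) \<partial>M) - Gr M (\<lambda>x. min (u x) (v x))
     \<le> (integral\<^sup>L M u - Gr M u) + (integral\<^sup>L M v - Gr M v)"
    and "(\<integral>x. max (u x) (v x) \<partial>M) - Gr M (\<lambda>x. max (u x) (v x))
     \<le> (integral\<^sup>L M u - Gr M u) + (integral\<^sup>L M v - Gr M v)"
proof -
  have imin: "integrable M (\<lambda>x. min (u x) (v x))" using iu iv by (rule integrable_min)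
  have imax: "integrable M (\<lambda>x. max (u x) (v x))" using iu iv by (rule integrable_max)
  have mm: "(\<integral>x. min (u x) (v x) \<partial>M) + (\<integral>x. max (u x) (v x) \<partial>M) = integral\<^sup>L M u + integral\<^sup>L M v"
  proof -
    have "(\<integral>x. min (u x) (v x) \<partial>M) + (\<integral>x. max (u x) (v x) \<partial>M) = (\<integral>x. min (u x) (v x) + max (u x) (v x) \<partial>M)"
      using imin imax by simp
    also have "\<dots> = (\<integral>x. u x + v x \<partial>M)"
      by (rule Bochner_Integration.integral_cong) (auto simp: min_def max_def)
    finally show ?thesis using iu iv by simp
  qed
  have pmin: "AE x in M. 0 < min (u x) (v x)" using pu pv by eventually_elim simp
  have pmax: "AE x in M. 0 < max (u x) (v x)" using pu pv by eventually_elim simp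
  have mmin: "(\<lambda>x. min (u x) (v x)) \<in> borel_measurable M" using mu mv by measurable
  have mmax: "(\<lambda>x. max (u x) (v x)) \<in> borel_measurable M" using mu mv by measurable
  have Gmin: "Gr M (\<lambda>x. min (u x) (v x)) \<le> (\<integral>x. min (u x) (v x) \<partial>M)" by (rule Gr_le_int[OF imin pmin])
  have Gmax: "Gr M (\<lambda>x. max (u x) (v x)) \<le> (\<integral>x. max (u x) (v x) \<partial>M)" by (rule Gr_le_int[OF imax pmax])
  have Gu: "Gr M u \<le> integral\<^sup>L M u" by (rule Gr_le_int[OF iu pu])
  have Gv: "Gr M v \<le> integral\<^sup>L M v" by (rule Gr_le_int[OF iv pv])
  have uM: "Gr M u \<le> Gr M (\<lambda>x. max (u x) (v x))"
    by (rule Gr_mono[OF imax mu mmax pu]) simp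
  have vM: "Gr M v \<le> Gr M (\<lambda>x. max (u x) (v x))"
    by (rule Gr_mono[OF imax mv mmax pv]) simp
  have vint: "integral\<^sup>L M v \<le> (\<integral>x. max (u x) (v x) \<partial>M)"
    by (intro integral_mono iv imax) simp
  have uint: "integral\<^sup>L M u \<le> (\<integral>x. max (u x) (v x) \<partial>M)"
    by (intro integral_mono iu imax) simp
  have n1: "0 \<le> Gr M (\<lambda>x. min (u x) (v x))" by (rule Gr_nonneg)
  have n2: "0 \<le> (\<integral>x. min (u x) (v x) \<partial>M)" using pmin
    by (intro integral_nonneg_AE) (auto elim: eventually_mono)
  have key: "Gr M u + Gr M v \<le> Gr M (\<lambda>x. min (u x) (v x)) + Gr M (\<lambda>x. max (u x) (v x))
     \<or> Gr M u = 0 \<or> Gr M v = 0"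
    using Gr_minmax[OF iu iv mu mv pu pv] by (auto simp: Gr_def)
  show "(\<integral>x. min (u x) (v x) \<partial>M) - Gr M (\<lambda>x. min (u x) (v x))
     \<le> (integral\<^sup>L M u - Gr M u) + (integral\<^sup>L M v - Gr M v)"
    using key mm Gmax Gu Gv vint uint n1 by linarith
  show "(\<integral>x. max (u x) (v x) \<partial>M) - Gr M (\<lambda>x. max (u x) (v x))
     \<le> (integral\<^sup>L M u - Gr M u) + (integral\<^sup>L M v - Gr M v)"
    using key mm Gmin uM vM n1 n2 by linarith
qed

lemma tangent:
  fixes t t0 :: real
  assumes t: "t \<le> 0" and t0: "t0 \<le> 0"
  shows "4 * exp t0 - (exp t0)\<^sup>2 + (4 * exp t0 - 2 * (exp t0)\<^sup>2) * (t - t0) \<le> 4 * exp t - (exp t)\<^sup>2"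
proof -
  define c where "c = 4 * exp t0 - 2 * (exp t0)\<^sup>2"
  define D where "D = (\<lambda>s. 4 * exp s - (exp s)\<^sup>2 - c * s)"
  have der: "DERIV D s :> 2 * (exp s - exp t0) * (2 - exp s - exp t0)" for s
  proof -
    have "DERIV D s :> 4 * exp s - 2 * exp s * exp s - c"
      unfolding D_def by (auto intro!: derivative_eq_intros simp: power2_eq_square)
    moreover have "4 * exp s - 2 * exp s * exp s - c = 2 * (exp s - exp t0) * (2 - exp s - exp t0)"
      by (simp add: c_def algebra_simps power2_eq_square)
    ultimately show ?thesis by simp
  qed
  have "D t0 \<le> D t"
  proof (cases "t \<le> t0")
    case True
    show ?thesis
    proof (rule DERIV_nonpos_imp_nonincreasing[OF True])
      fix s assume s: "t \<le> s" "s \<le> t0"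
      have "exp s \<le> exp t0" using s by simp
      moreover have "exp t0 \<le> 1" using t0 by simp
      moreover have "exp s \<le> 1" using s t0 by simp
      ultimately have f1: "2 * (exp s - exp t0) \<le> 0" and f2: "0 \<le> 2 - exp s - exp t0" by (auto simp del: exp_le_cancel_iff exp_le_one_iff)
      have "2 * (exp s - exp t0) * (2 - exp s - exp t0) \<le> 0"
        by (rule mult_nonpos_nonneg[OF f1 f2])
      then show "\<exists>y. DERIV D s :> y \<and> y \<le> 0" using der by blast
    qed
  next
    case False
    show ?thesis
    proof (rule DERIV_nonneg_imp_nondecreasing[of t0 t])
      show "t0 \<le> t" using False by simp
      fix s assume s: "t0 \<le> s" "s \<le> t"
      have "exp t0 \<le> exp s" using s by simp
      moreover have "exp s \<le> 1" using t s by simp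
      moreover have "exp t0 \<le> 1" using t0 by simp
      ultimately have f1: "0 \<le> 2 * (exp s - exp t0)" and f2: "0 \<le> 2 - exp s - exp t0" by (auto simp del: exp_le_cancel_iff exp_le_one_iff)
      have "0 \<le> 2 * (exp s - exp t0) * (2 - exp s - exp t0)"
        by (rule mult_nonneg_nonneg[OF f1 f2])
      then show "\<exists>y. DERIV D s :> y \<and> y \<ge> 0" using der by blast
    qed
  qed
  then show ?thesis by (simp add: D_def c_def algebra_simps)
qed

lemma (in prob_space) partC:
  assumes iu: "integrable M u" and mu: "u \<in> borel_measurable M"
    and nn: "\<And>x. 0 \<le> u x" and pu: "AE x in M. 0 < u x"
  shows "(\<integral>x. min (u x) ((u x)\<^sup>2) \<partial>M) - Gr M (\<lambda>x. min (u x) ((u x)\<^sup>2))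
     \<le> 4 * (integral\<^sup>L M u - Gr M u)"
proof -
  define k where "k = (\<lambda>x. min (u x) ((u x)\<^sup>2))"
  have mk: "k \<in> borel_measurable M" unfolding k_def using mu by measurable
  have ik: "integrable M k"
    by (rule Bochner_Integration.integrable_bound[OF iu mk]) (auto simp: k_def nn)
  have Gk0: "0 \<le> Gr M k" by (rule Gr_nonneg)
  have ku: "integral\<^sup>L M k \<le> integral\<^sup>L M u" by (intro integral_mono ik iu) (simp add: k_def)
  show ?thesis
  proof (cases "integrable M (\<lambda>x. ln (u x))")
    case False
    then have "Gr M u = 0" by (simp add: Gr_def)
    moreover have "0 \<le> integral\<^sup>L M u" using nn by (intro integral_nonneg_AE) auto
    ultimately show ?thesis using Gk0 ku by (simp add: k_def)
  next
    case lu: True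
    define a where "a = (\<lambda>x. min 1 (u x))"
    define b where "b = (\<lambda>x. max 1 (u x))"
    have ma: "a \<in> borel_measurable M" unfolding a_def using mu by measurable
    have mb: "b \<in> borel_measurable M" unfolding b_def using mu by measurable
    have ia: "integrable M a"
      by (rule Bochner_Integration.integrable_bound[OF iu ma]) (auto simp: a_def nn)
    have ib0: "integrable M (\<lambda>x. u x + 1 - a x)" using iu ia by auto
    have beq: "b = (\<lambda>x. u x + 1 - a x)" by (auto simp: a_def b_def min_def max_def)
    have ib: "integrable M b" using ib0 beq by simp
    have ma2: "(\<lambda>x. (a x)\<^sup>2) \<in> borel_measurable M" using ma by measurable
    have ia2: "integrable M (\<lambda>x. (a x)\<^sup>2)"
    proof (rule Bochner_Integration.integrable_bound[OF ia ma2])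
      show "AE x in M. norm ((a x)\<^sup>2) \<le> norm (a x)"
      proof (rule AE_I2)
        fix x
        have "0 \<le> a x" "a x \<le> 1" using nn[of x] by (auto simp: a_def)
        then show "norm ((a x)\<^sup>2) \<le> norm (a x)" by (simp add: power2_eq_square mult_le_one mult_left_le)
      qed
    qed
    have mla: "(\<lambda>x. ln (a x)) \<in> borel_measurable M" using ma by measurable
    have mlb: "(\<lambda>x. ln (b x)) \<in> borel_measurable M" using mb by measurable
    have la: "integrable M (\<lambda>x. ln (a x))"
      by (rule Bochner_Integration.integrable_bound[OF lu mla]) (auto simp: a_def min_def)
    have lb: "integrable M (\<lambda>x. ln (b x))"
      by (rule Bochner_Integration.integrable_bound[OF lu mlb]) (auto simp: b_def max_def)
    define P where "P = (\<integral>x. ln (a x) \<partial>M)"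
    define Q where "Q = (\<integral>x. ln (b x) \<partial>M)"
    have lnu: "(\<integral>x. ln (u x) \<partial>M) = P + Q"
    proof -
      have "(\<integral>x. ln (u x) \<partial>M) = (\<integral>x. ln (a x) + ln (b x) \<partial>M)"
        by (rule Bochner_Integration.integral_cong) (auto simp: a_def b_def min_def max_def)
      then show ?thesis using la lb by (simp add: P_def Q_def)
    qed
    have lnk_eq: "AE x in M. ln (k x) = 2 * ln (a x) + ln (b x)"
      using pu
    proof eventually_elim
      case (elim x)
      show ?case
      proof (cases "u x \<le> 1")
        case True
        then have "k x = (u x)^2" by (simp add: k_def power2_eq_square mult_le_one mult_left_le nn)
        then show ?thesis using True elim by (simp add: a_def b_def ln_realpow)
      next
        case False
        then have "k x = u x" using nn[of x] by (simp add: k_def power2_eq_square)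
        then show ?thesis using False by (simp add: a_def b_def)
      qed
    qed
    have lk2: "integrable M (\<lambda>x. 2 * ln (a x) + ln (b x))" using la lb by auto
    have mlk: "(\<lambda>x. ln (k x)) \<in> borel_measurable M" using mk by measurable
    have lk: "integrable M (\<lambda>x. ln (k x))"
      using lk2 lnk_eq mlk by (subst integrable_cong_AE[where g="\<lambda>x. 2 * ln (a x) + ln (b x)"]) (auto simp: mk)
    have lnk: "(\<integral>x. ln (k x) \<partial>M) = 2 * P + Q"
    proof -
      have "(\<integral>x. ln (k x) \<partial>M) = (\<integral>x. 2 * ln (a x) + ln (b x) \<partial>M)"
        by (rule integral_cong_AE) (use mk ma mb lnk_eq in auto)
      then show ?thesis using la lb by (simp add: P_def Q_def)
    qed
    have Gu: "Gr M u = exp P * exp Q" using lu lnu by (simp add: Gr_def exp_add)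
    have Gk: "Gr M k = (exp P)\<^sup>2 * exp Q" using lk lnk
      by (simp add: Gr_def exp_add exp_double)
    have intu: "integral\<^sup>L M u = integral\<^sup>L M a + integral\<^sup>L M b - 1"
    proof -
      have "integral\<^sup>L M u = (\<integral>x. a x + b x - 1 \<partial>M)"
        by (rule Bochner_Integration.integral_cong) (auto simp: a_def b_def min_def max_def)
      then show ?thesis using ia ib by (simp add: prob_space)
    qed
    have intk: "integral\<^sup>L M k = (\<integral>x. (a x)\<^sup>2 \<partial>M) + integral\<^sup>L M b - 1"
    proof -
      have "integral\<^sup>L M k = (\<integral>x. (a x)\<^sup>2 + b x - 1 \<partial>M)"
      proof (rule Bochner_Integration.integral_cong)
        fix x
        show "k x = (a x)\<^sup>2 + b x - 1"
        proof (cases "u x \<le> 1")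
          case True
          then have "k x = (u x)^2" by (simp add: k_def power2_eq_square mult_le_one mult_left_le nn)
          then show ?thesis using True by (simp add: a_def b_def)
        next
          case False
          then have "k x = u x" using nn[of x] by (simp add: k_def power2_eq_square)
          then show ?thesis using False by (simp add: a_def b_def)
        qed
      qed simp
      then show ?thesis using ia2 ib by (simp add: prob_space)
    qed
    have pa: "AE x in M. 0 < a x" using pu by eventually_elim (simp add: a_def)
    have pb: "AE x in M. 0 < b x" by (simp add: b_def)
    have Gb: "Gr M b \<le> integral\<^sup>L M b" by (rule Gr_le_int[OF ib pb])
    then have qb: "exp Q \<le> integral\<^sup>L M b" using lb by (simp add: Gr_def Q_def)
    have P0: "P \<le> 0"
    proof -
      have "P \<le> (\<integral>x. 0 \<partial>M)" unfolding P_def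
        using pa by (intro integral_mono_AE la) (auto elim!: eventually_mono simp: a_def)
      then show ?thesis by simp
    qed
    have Q0: "0 \<le> Q" unfolding Q_def by (intro integral_nonneg_AE) (simp add: b_def)
    define c where "c = 4 * exp P - 2 * (exp P)\<^sup>2"
    have tan: "AE x in M. 4 * exp P - (exp P)\<^sup>2 + c * (ln (a x) - P) \<le> 4 * a x - (a x)\<^sup>2"
      using pa
    proof eventually_elim
      case (elim x)
      have "ln (a x) \<le> 0" using elim by (simp add: a_def)
      from tangent[OF this P0] show ?case using elim by (simp add: c_def)
    qed
    have "(\<integral>x. 4 * exp P - (exp P)\<^sup>2 + c * (ln (a x) - P) \<partial>M) \<le> (\<integral>x. 4 * a x - (a x)\<^sup>2 \<partial>M)"
      using tan la ia ia2 by (intro integral_mono_AE) auto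
    moreover have "(\<integral>x. 4 * exp P - (exp P)\<^sup>2 + c * (ln (a x) - P) \<partial>M) = 4 * exp P - (exp P)\<^sup>2"
      using la by (simp add: prob_space P_def algebra_simps)
    moreover have "(\<integral>x. 4 * a x - (a x)\<^sup>2 \<partial>M) = 4 * integral\<^sup>L M a - (\<integral>x. (a x)\<^sup>2 \<partial>M)"
      using ia ia2 by simp
    ultimately have tanI: "4 * exp P - (exp P)\<^sup>2 \<le> 4 * integral\<^sup>L M a - (\<integral>x. (a x)\<^sup>2 \<partial>M)" by simp
    have p1: "exp P \<le> 1" using P0 by simp
    have q1: "1 \<le> exp Q" using Q0 by simp
    have prod: "0 \<le> (exp Q - 1) * (1 - exp P) * (3 - exp P)"
      using p1 q1 by (intro mult_nonneg_nonneg) (auto simp del: exp_le_cancel_iff exp_le_one_iff one_le_exp_iff)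
    have expand: "(exp Q - 1) * (1 - exp P) * (3 - exp P)
       = 3 * exp Q - 4 * (exp P * exp Q) + (exp P)\<^sup>2 * exp Q - 3 + 4 * exp P - (exp P)\<^sup>2"
      by (simp add: algebra_simps power2_eq_square)
    show ?thesis unfolding k_def[symmetric]
      using Gu Gk intu intk qb tanI prod expand by (smt (verit))
  qed
qed

lemma min_sq: "0 \<le> a \<Longrightarrow> 0 \<le> (b::real) \<Longrightarrow> (min a b)\<^sup>2 = min (a\<^sup>2) (b\<^sup>2)"
  by (cases "a \<le> b") (auto simp: min_def power_mono intro: antisym power_mono)

lemma max_sq: "0 \<le> a \<Longrightarrow> 0 \<le> (b::real) \<Longrightarrow> (max a b)\<^sup>2 = max (a\<^sup>2) (b\<^sup>2)"
  by (cases "a \<le> b") (auto simp: max_def power_mono intro: antisym power_mono)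

theorem mainTheorem8:
  fixes M :: "'a measure" and f g :: "'a \<Rightarrow> complex"
  assumes "prob_space M"
    and "f \<in> L2 M" and "g \<in> L2 M"
    and "measure M {x \<in> space M. cmod (f x * g x) = 0} = 0"
  shows "(\<forall>h \<in> borel_measurable M. (\<forall>x. cmod (h x) = min (cmod (f x)) (cmod (g x)))
            \<longrightarrow> Edef M h \<le> Edef M f + Edef M g)
       \<and> (\<forall>h \<in> borel_measurable M. (\<forall>x. cmod (h x) = max (cmod (f x)) (cmod (g x)))
            \<longrightarrow> Edef M h \<le> Edef M f + Edef M g)
       \<and> (\<forall>h \<in> borel_measurable M. (\<forall>x. cmod (h x) = min (cmod (f x)) (cmod ((f x)\<^sup>2)))
            \<longrightarrow> Edef M h \<le> 4 * Edef M f)"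
proof -
  interpret prob_space M by fact
  define u where "u = (\<lambda>x. (cmod (f x))\<^sup>2)"
  define v where "v = (\<lambda>x. (cmod (g x))\<^sup>2)"
  have mf: "f \<in> borel_measurable M" and iu: "integrable M u"
    using assms(2) by (auto simp: L2_def u_def)
  have mg: "g \<in> borel_measurable M" and iv: "integrable M v"
    using assms(3) by (auto simp: L2_def v_def)
  have mu: "u \<in> borel_measurable M" unfolding u_def using mf by measurable
  have mv: "v \<in> borel_measurable M" unfolding v_def using mg by measurable
  define N where "N = {x \<in> space M. cmod (f x * g x) = 0}"
  have Ns: "N \<in> sets M" unfolding N_def using mf mg by measurable
  have "emeasure M N = 0" using assms(4) Ns by (simp add: N_def emeasure_eq_measure)
  then have "N \<in> null_sets M" using Ns by auto
  then have aeN: "AE x in M. x \<notin> N" by (rule AE_not_in)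
  have pfg: "AE x in M. 0 < u x \<and> 0 < v x"
    using aeN
  proof (rule AE_mp[OF _ AE_I2], intro impI)
    fix x assume "x \<in> space M" "x \<notin> N"
    then have "f x \<noteq> 0" "g x \<noteq> 0" by (auto simp: N_def)
    then show "0 < u x \<and> 0 < v x" by (simp add: u_def v_def)
  qed
  have pu: "AE x in M. 0 < u x" using pfg by (auto elim: eventually_mono)
  have pv: "AE x in M. 0 < v x" using pfg by (auto elim: eventually_mono)
  have Ef: "Edef M f = integral\<^sup>L M u - Gr M u" by (simp add: Edef_def geo_Gr u_def)
  have Eg: "Edef M g = integral\<^sup>L M v - Gr M v" by (simp add: Edef_def geo_Gr v_def)
  have A: "Edef M h \<le> Edef M f + Edef M g"
    if "\<forall>x. cmod (h x) = min (cmod (f x)) (cmod (g x))" for h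
  proof -
    have "(\<lambda>x. (cmod (h x))\<^sup>2) = (\<lambda>x. min (u x) (v x))"
      using that by (simp add: u_def v_def min_sq)
    then have "Edef M h = (\<integral>x. min (u x) (v x) \<partial>M) - Gr M (\<lambda>x. min (u x) (v x))"
      by (simp add: Edef_def geo_Gr)
    then show ?thesis using partA(1)[OF iu iv mu mv pu pv] Ef Eg by simp
  qed
  have B: "Edef M h \<le> Edef M f + Edef M g"
    if "\<forall>x. cmod (h x) = max (cmod (f x)) (cmod (g x))" for h
  proof -
    have "(\<lambda>x. (cmod (h x))\<^sup>2) = (\<lambda>x. max (u x) (v x))"
      using that by (simp add: u_def v_def max_sq)
    then have "Edef M h = (\<integral>x. max (u x) (v x) \<partial>M) - Gr M (\<lambda>x. max (u x) (v x))"
      by (simp add: Edef_def geo_Gr)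
    then show ?thesis using partA(2)[OF iu iv mu mv pu pv] Ef Eg by simp
  qed
  have C: "Edef M h \<le> 4 * Edef M f"
    if "\<forall>x. cmod (h x) = min (cmod (f x)) (cmod ((f x)\<^sup>2))" for h
  proof -
    have "(\<lambda>x. (cmod (h x))\<^sup>2) = (\<lambda>x. min (u x) ((u x)\<^sup>2))"
      using that by (simp add: u_def norm_power min_sq power_mult[symmetric])
    then have "Edef M h = (\<integral>x. min (u x) ((u x)\<^sup>2) \<partial>M) - Gr M (\<lambda>x. min (u x) ((u x)\<^sup>2))"
      by (simp add: Edef_def geo_Gr)
    moreover have "\<And>x. 0 \<le> u x" by (simp add: u_def)
    ultimately show ?thesis using partC[OF iu mu _ pu] Ef by simp
  qed
  show ?thesis using A B C by blast
qed

end
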